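(* Let $D$ be an oriented graph whose missing graph is a vertex-disjoint union of paths, and let $ab$, $xy$, $zt$ be missing edges of $D$. If $xy$ loses to $ab$ and $zt$ loses to $ab$, then $\{x,y\}\cap\{z,t\}\neq\emptyset$.
   Context: All digraphs are finite oriented graphs. $N^+(v)$ is the out-neighborhood; $N^{++}(v)$ is the set of vertices $w\notin N^+(v)\cup\{v\}$ with $u\to w$ for some $u\in N^+(v)$. A missing edge is a pair of distinct non-adjacent vertices; the missing graph is formed by the missing edges. For missing edges $\{x,y\},\{a,b\}$, $\{x,y\}$ loses to $\{a,b\}$ if the endpoints can be labelled so that $x\to a$, $b\notin N^+(x)\cup N^{++}(x)$, $y\to b$, $a\notin N^+(y)\cup N^{++}(y)$. *)

theory Defs
  imports Main
begin

definition oriented_graph :: "'a set \<Rightarrow> ('a \<times> 'a) set \<Rightarrow> bool" where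
  "oriented_graph V A \<longleftrightarrow> finite V \<and> A \<subseteq> V \<times> V \<and>
     (\<forall>u. (u, u) \<notin> A) \<and> (\<forall>u v. (u, v) \<in> A \<longrightarrow> (v, u) \<notin> A)"

definition out_nbhd :: "('a \<times> 'a) set \<Rightarrow> 'a \<Rightarrow> 'a set" where
  "out_nbhd A v = {w. (v, w) \<in> A}"

definition second_out_nbhd :: "('a \<times> 'a) set \<Rightarrow> 'a \<Rightarrow> 'a set" where
  "second_out_nbhd A v =
     {w. w \<notin> out_nbhd A v \<and> w \<noteq> v \<and> (\<exists>u \<in> out_nbhd A v. (u, w) \<in> A)}"

definition missing :: "'a set \<Rightarrow> ('a \<times> 'a) set \<Rightarrow> 'a \<Rightarrow> 'a \<Rightarrow> bool" where
  "missing V A u v \<longleftrightarrow> u \<in> V \<and> v \<in> V \<and> u \<noteq> v \<and> (u, v) \<notin> A \<and> (v, u) \<notin> A"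

definition missing_graph_union_of_paths :: "'a set \<Rightarrow> ('a \<times> 'a) set \<Rightarrow> bool" where
  "missing_graph_union_of_paths V A \<longleftrightarrow>
     (\<exists>Ps :: 'a list set.
        (\<forall>p \<in> Ps. p \<noteq> [] \<and> distinct p) \<and>
        (\<forall>p \<in> Ps. \<forall>q \<in> Ps. p \<noteq> q \<longrightarrow> set p \<inter> set q = {}) \<and>
        \<Union> (set ` Ps) = V \<and>
        (\<forall>u v. missing V A u v \<longleftrightarrow>
           (\<exists>p \<in> Ps. \<exists>i. Suc i < length p \<and> {p ! i, p ! Suc i} = {u, v})))"

definition loses_to :: "('a \<times> 'a) set \<Rightarrow> 'a \<Rightarrow> 'a \<Rightarrow> 'a \<Rightarrow> 'a \<Rightarrow> bool" where
  "loses_to A x y a b \<longleftrightarrow>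
     (\<exists>x' y' a' b'. {x', y'} = {x, y} \<and> {a', b'} = {a, b} \<and>
        (x', a') \<in> A \<and> b' \<notin> out_nbhd A x' \<union> second_out_nbhd A x' \<and>
        (y', b') \<in> A \<and> a' \<notin> out_nbhd A y' \<union> second_out_nbhd A y')"

end

theory Submission
  imports Defs
begin

definition LL :: "('a \<times> 'a) set \<Rightarrow> 'a \<Rightarrow> 'a \<Rightarrow> 'a \<Rightarrow> 'a \<Rightarrow> bool" where
  "LL A x y a b \<longleftrightarrow> (x, a) \<in> A \<and> b \<notin> out_nbhd A x \<union> second_out_nbhd A x \<and>
        (y, b) \<in> A \<and> a \<notin> out_nbhd A y \<union> second_out_nbhd A y"

lemma LL_sym: "LL A x y a b \<longleftrightarrow> LL A y x b a"
  unfolding LL_def by blast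

lemma loses_LL:
  assumes "loses_to A x y a b"
  shows "\<exists>x' y'. {x', y'} = {x, y} \<and> LL A x' y' a b"
proof -
  obtain x' y' a' b' where h: "{x', y'} = {x, y}" "{a', b'} = {a, b}" "LL A x' y' a' b'"
    using assms unfolding loses_to_def LL_def by blast
  show ?thesis
  proof (cases "a' = a \<and> b' = b")
    case True then show ?thesis using h by blast
  next
    case False
    then have "a' = b" "b' = a" using h(2) by (auto simp: doubleton_eq_iff)
    then have "LL A y' x' a b" using h(3) LL_sym by metis
    moreover have "{y', x'} = {x, y}" using h(1) by blast
    ultimately show ?thesis by blast
  qed
qed

lemma cross:
  assumes og: "oriented_graph V A" and ab: "missing V A a b"
    and l1: "LL A x y a b" and l2: "LL A z t a b" and ne: "x \<noteq> t"
  shows "missing V A x t"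
proof -
  have AV: "A \<subseteq> V \<times> V" using og unfolding oriented_graph_def by blast
  have xa: "(x,a) \<in> A" and tb: "(t,b) \<in> A" and bx: "b \<notin> out_nbhd A x \<union> second_out_nbhd A x"
    and at: "a \<notin> out_nbhd A t \<union> second_out_nbhd A t"
    using l1 l2 unfolding LL_def by auto
  have "b \<noteq> x" using xa ab unfolding missing_def by auto
  have "a \<noteq> t" using tb ab unfolding missing_def by auto
  have 1: "(x,t) \<notin> A"
  proof
    assume "(x,t) \<in> A"
    then have "b \<in> second_out_nbhd A x" using bx tb \<open>b \<noteq> x\<close>
      unfolding second_out_nbhd_def out_nbhd_def by auto
    then show False using bx by auto
  qed
  have 2: "(t,x) \<notin> A"
  proof
    assume "(t,x) \<in> A"
    then have "a \<in> second_out_nbhd A t" using at xa \<open>a \<noteq> t\<close>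
      unfolding second_out_nbhd_def out_nbhd_def by auto
    then show False using at by auto
  qed
  show ?thesis unfolding missing_def using 1 2 ne xa tb AV by auto
qed

lemma no_C4:
  assumes P: "missing_graph_union_of_paths V A"
    and d: "distinct [x, y, z, t]"
    and m1: "missing V A x y" and m2: "missing V A y z"
    and m3: "missing V A z t" and m4: "missing V A t x"
  shows False
proof -
  obtain Ps where Ps1: "\<forall>p \<in> Ps. p \<noteq> [] \<and> distinct p"
    and Ps2: "\<forall>p \<in> Ps. \<forall>q \<in> Ps. p \<noteq> q \<longrightarrow> set p \<inter> set q = {}"
    and Ps4: "\<And>u v. missing V A u v \<longleftrightarrow>
           (\<exists>p \<in> Ps. \<exists>i. Suc i < length p \<and> {p ! i, p ! Suc i} = {u, v})"
    using P unfolding missing_graph_union_of_paths_def by metis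
  have stay: "v \<in> set p" if h: "p \<in> Ps" "u \<in> set p" "missing V A u v" for p u v
  proof -
    obtain q i where q: "q \<in> Ps" "Suc i < length q" "{q ! i, q ! Suc i} = {u, v}"
      using Ps4 h(3) by blast
    have "{q ! i, q ! Suc i} \<subseteq> set q" using q(2) by auto
    then have "u \<in> set q" "v \<in> set q" using q(3) by auto
    then have "q = p" using Ps2 h q(1) by blast
    then show ?thesis using \<open>v \<in> set q\<close> by simp
  qed
  have adj: "k = Suc j \<or> j = Suc k"
    if h: "p \<in> Ps" "j < length p" "k < length p" "missing V A (p ! j) (p ! k)" for p j k
  proof -
    obtain q i where q: "q \<in> Ps" "Suc i < length q" "{q ! i, q ! Suc i} = {p ! j, p ! k}"
      using Ps4 h(4) by blast
    have "p ! j \<in> set q" proof -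
      have "{q ! i, q ! Suc i} \<subseteq> set q" using q(2) by auto
      then show ?thesis using q(3) by auto
    qed
    moreover have "p ! j \<in> set p" using h by simp
    ultimately have "q = p" using Ps2 h(1) q(1) by blast
    with q have e: "{p ! i, p ! Suc i} = {p ! j, p ! k}" by simp
    have dp: "distinct p" using Ps1 h(1) by blast
    have jk: "j \<noteq> k" using h(4) unfolding missing_def by auto
    from e have "(p ! i = p ! j \<and> p ! Suc i = p ! k) \<or> (p ! i = p ! k \<and> p ! Suc i = p ! j)"
      by (auto simp: doubleton_eq_iff)
    then have "(i = j \<and> Suc i = k) \<or> (i = k \<and> Suc i = j)"
      using nth_eq_iff_index_eq[OF dp] q(2) \<open>q = p\<close> h(2,3) by auto
    then show ?thesis by auto
  qed
  obtain p where p: "p \<in> Ps" "x \<in> set p"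
  proof -
    obtain q i where q: "q \<in> Ps" "Suc i < length q" "{q ! i, q ! Suc i} = {x, y}"
      using Ps4 m1 by blast
    have "x \<in> set q" proof -
      have "{q ! i, q ! Suc i} \<subseteq> set q" using q(2) by auto
      then show ?thesis using q(3) by auto
    qed
    then show ?thesis using that q(1) by blast
  qed
  have yp: "y \<in> set p" using stay p m1 by blast
  have zp: "z \<in> set p" using stay p yp m2 by blast
  have tp: "t \<in> set p" using stay p zp m3 by blast
  obtain ix where ix: "ix < length p" "p ! ix = x" using p(2) by (metis in_set_conv_nth)
  obtain iy where iy: "iy < length p" "p ! iy = y" using yp by (metis in_set_conv_nth)
  obtain iz where iz: "iz < length p" "p ! iz = z" using zp by (metis in_set_conv_nth)
  obtain it where it: "it < length p" "p ! it = t" using tp by (metis in_set_conv_nth)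
  have a1: "iy = Suc ix \<or> ix = Suc iy" using adj[OF p(1) ix(1) iy(1)] m1 ix iy by simp
  have a2: "iz = Suc iy \<or> iy = Suc iz" using adj[OF p(1) iy(1) iz(1)] m2 iz iy by simp
  have a3: "it = Suc iz \<or> iz = Suc it" using adj[OF p(1) iz(1) it(1)] m3 iz it by simp
  have a4: "ix = Suc it \<or> it = Suc ix" using adj[OF p(1) it(1) ix(1)] m4 ix it by simp
  have "ix \<noteq> iz" using d ix iz by auto
  moreover have "iy \<noteq> it" using d iy it by auto
  ultimately show False using a1 a2 a3 a4 by linarith
qed

theorem lemma4p2:
  fixes V :: "'a set" and A :: "('a \<times> 'a) set" and a b x y z t :: 'a
  assumes "oriented_graph V A"
    and "missing_graph_union_of_paths V A"
    and "missing V A a b" and "missing V A x y" and "missing V A z t"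
    and "loses_to A x y a b" and "loses_to A z t a b"
  shows "{x, y} \<inter> {z, t} \<noteq> {}"
proof
  assume disj: "{x, y} \<inter> {z, t} = {}"
  obtain x' y' where xy: "{x', y'} = {x, y}" "LL A x' y' a b" using loses_LL[OF assms(6)] by auto
  obtain z' t' where zt: "{z', t'} = {z, t}" "LL A z' t' a b" using loses_LL[OF assms(7)] by auto
  have sym: "missing V A u v \<Longrightarrow> missing V A v u" for u v unfolding missing_def by auto
  have cx: "(x' = x \<and> y' = y) \<or> (x' = y \<and> y' = x)" using xy(1) by (simp add: doubleton_eq_iff)
  have cz: "(z' = z \<and> t' = t) \<or> (z' = t \<and> t' = z)" using zt(1) by (simp add: doubleton_eq_iff)
  have mxy: "missing V A x' y'" using cx assms(4) sym by blast
  have mzt: "missing V A z' t'" using cz assms(5) sym by blast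
  have n1: "x' \<noteq> y'" "z' \<noteq> t'" using mxy mzt unfolding missing_def by auto
  have n2: "x' \<noteq> z'" "x' \<noteq> t'" "y' \<noteq> z'" "y' \<noteq> t'" using cx cz disj by auto
  have dist: "distinct [x', y', z', t']" using n1 n2 by (simp only: distinct.simps list.set insert_iff empty_iff) blast
  have mxt: "missing V A x' t'" using cross[OF assms(1,3) xy(2) zt(2)] dist by auto
  have mzy: "missing V A z' y'" using cross[OF assms(1,3) zt(2) xy(2)] dist by auto
  show False using no_C4[OF assms(2) dist mxy sym[OF mzy] mzt sym[OF mxt]] .
qed

end
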